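(* Let $\mathcal L:\sum_{i=1}^kc_ix_i=0$ be a homogeneous linear equation with $k\ge3$ and nonzero integer coefficients, and let $\mathcal G$ be a class of finite abelian groups. Suppose $\delta_{\mathrm{VC}}(\mathcal L)=0$ with respect to $\mathcal G$. Then for every $\alpha>0$ there is $K=K(\alpha,\mathcal L)$ such that for every $\Gamma\in\mathcal G$ and every $\mathcal L$-solution-free $A\subseteq\Gamma$ with $|A|\ge\alpha|\Gamma|$, there is $T\subseteq\Gamma$ with $|T|\le K$ and $A+T=\Gamma$ (i.e. $A$ is syndetic).
   Context: $A\subseteq\Gamma$ is $\mathcal L$-solution-free if there is no $(x_1,\dots,x_k)\in A^k$ with pairwise distinct entries and $\sum_ic_ix_i=0$. $\mathrm{VC}(\mathsf{Cay}(\Gamma,A))$ denotes the VC dimension of the set system $\{x-A:x\in\Gamma\}$ on ground set $\Gamma$ (the neighborhoods in the Cayley graph). The VC-dimension threshold is $\delta_{\mathrm{VC}}(\mathcal L)=\inf\{\alpha\ge0:\exists C(\alpha,\mathcal L)$ such that for every $\Gamma\in\mathcal G$ and every $\mathcal L$-solution-free $A\subseteq\Gamma$ with $|A|\ge\alpha|\Gamma|$, $\mathrm{VC}(\mathsf{Cay}(\Gamma,A))\le C\}$. *)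

theory Defs
  imports "HOL-Algebra.Algebra" "HOL-Analysis.Analysis"
begin

text \<open>Linear equation L: sum_{i<k} c_i x_i = 0, given by the coefficient list cs
  (k = length cs).  Groups are abelian groups in HOL-Algebra, written
  multiplicatively: the equation reads prod_i x_i^(c_i) = 1.\<close>

definition solution_free :: "('a, 'b) monoid_scheme \<Rightarrow> int list \<Rightarrow> 'a set \<Rightarrow> bool" where
  "solution_free G cs A \<longleftrightarrow>
     \<not> (\<exists>x :: nat \<Rightarrow> 'a. (\<forall>i<length cs. x i \<in> A) \<and> inj_on x {..<length cs} \<and>
          finprod G (\<lambda>i. x i [^]\<^bsub>G\<^esub> (cs ! i)) {..<length cs} = \<one>\<^bsub>G\<^esub>)"

text \<open>Translate x - A (additive), i.e. { x * a^{-1} : a in A }.\<close>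
definition neg_translate :: "('a, 'b) monoid_scheme \<Rightarrow> 'a \<Rightarrow> 'a set \<Rightarrow> 'a set" where
  "neg_translate G x A = (\<lambda>a. x \<otimes>\<^bsub>G\<^esub> inv\<^bsub>G\<^esub> a) ` A"

definition shatters :: "'a set set \<Rightarrow> 'a set \<Rightarrow> bool" where
  "shatters F S \<longleftrightarrow> (\<lambda>B. S \<inter> B) ` F = Pow S"

definition vc_dim :: "'a set \<Rightarrow> 'a set set \<Rightarrow> nat" where
  "vc_dim Gr F = Complete_Lattices.Sup (card ` {Y. Y \<subseteq> Gr \<and> finite Y \<and> shatters F Y})"

text \<open>VC dimension of the Cayley graph Cay(G, A): set system {x - A : x in G} on G.\<close>
definition vc_cayley :: "('a, 'b) monoid_scheme \<Rightarrow> 'a set \<Rightarrow> nat" where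
  "vc_cayley G A = vc_dim (carrier G) ((\<lambda>x. neg_translate G x A) ` carrier G)"

definition delta_VC :: "('a, 'b) monoid_scheme set \<Rightarrow> int list \<Rightarrow> real" where
  "delta_VC \<G> cs = Complete_Lattices.Inf {\<alpha>. \<alpha> \<ge> 0 \<and> (\<exists>C::nat. \<forall>G\<in>\<G>. \<forall>A. A \<subseteq> carrier G \<and> solution_free G cs A
        \<and> real (card A) \<ge> \<alpha> * real (card (carrier G)) \<longrightarrow> vc_cayley G A \<le> C)}"

end

theory Submission
  imports Defs
begin

lemma pow_exp_lim: "\<forall>c::real. c > 1 \<longrightarrow> (\<lambda>k::nat. real k ^ p / c ^ k) \<longlonglongrightarrow> 0"
proof (induction p)
  case 0
  then show ?case using LIMSEQ_divide_realpow_zero by auto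
next
  case (Suc p)
  show ?case
  proof (intro allI impI)
    fix c :: real assume c: "c > 1"
    have sc: "sqrt c > 1" using c by simp
    have t1: "(\<lambda>k::nat. real k ^ p / sqrt c ^ k) \<longlonglongrightarrow> 0" using Suc sc by blast
    have ii: "norm (inverse (sqrt c)) < 1" using sc by (auto simp: field_simps)
    have t2: "(\<lambda>k::nat. of_nat k * (inverse (sqrt c)) ^ k) \<longlonglongrightarrow> (0::real)"
      by (rule powser_times_n_limit_0[OF ii])
    have "(\<lambda>k::nat. (real k ^ p / sqrt c ^ k) * (of_nat k * (inverse (sqrt c)) ^ k)) \<longlonglongrightarrow> 0 * 0"
      by (rule tendsto_mult[OF t1 t2])
    moreover have "\<And>k. (real k ^ p / sqrt c ^ k) * (of_nat k * (inverse (sqrt c)) ^ k) = real k ^ Suc p / c ^ k"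
    proof -
      fix k
      have "sqrt c ^ k * sqrt c ^ k = c ^ k" using c by (simp add: power_mult_distrib[symmetric])
      then show "(real k ^ p / sqrt c ^ k) * (of_nat k * (inverse (sqrt c)) ^ k) = real k ^ Suc p / c ^ k"
        by (simp add: field_simps power_inverse)
    qed
    ultimately show "(\<lambda>k::nat. real k ^ Suc p / c ^ k) \<longlonglongrightarrow> 0" by simp
  qed
qed

lemma exists_k:
  fixes a :: real and d :: nat
  assumes "0 < a" "a < 1"
  shows "\<exists>k::nat. k > 0 \<and> real k * (1-a)^k \<le> 1/2 \<and> 2 * (2 * real (k*k) + 1)^d < 2^k"
proof -
  have n1: "norm (1 - a) < 1" using assms by auto
  have e1: "eventually (\<lambda>k. real k * (1-a)^k < 1/2) sequentially"
    by (rule order_tendstoD(2)[OF powser_times_n_limit_0[OF n1]]) simp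
  have e2: "eventually (\<lambda>k. real k ^ (2*d) / 2^k < 1/(2*3^d)) sequentially"
    by (rule order_tendstoD(2)[OF pow_exp_lim[rule_format, of 2 "2*d"]]) simp_all
  have e3: "eventually (\<lambda>k::nat. k \<ge> 1) sequentially" by (rule eventually_ge_at_top)
  have "eventually (\<lambda>k. real k * (1-a)^k < 1/2 \<and> real k ^ (2*d) / 2^k < 1/(2*3^d) \<and> k \<ge> 1) sequentially"
    by (rule eventually_conj[OF e1 eventually_conj[OF e2 e3]])
  then obtain N where "\<forall>n\<ge>N. real n * (1-a)^n < 1/2 \<and> real n ^ (2*d) / 2^n < 1/(2*3^d) \<and> n \<ge> 1"
    unfolding eventually_sequentially by blast
  then obtain k where k1: "real k * (1-a)^k < 1/2" and k2: "real k ^ (2*d) / 2^k < 1/(2*3^d)" and k3: "k \<ge> 1"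
    by blast
  have "1 \<le> real k ^ 2" using k3 by simp
  then have "2 * real (k*k) + 1 \<le> 3 * real k ^ 2" by (simp add: power2_eq_square)
  then have "(2 * real (k*k) + 1)^d \<le> (3 * real k ^ 2)^d" by (intro power_mono) auto
  also have "\<dots> = 3^d * real k ^ (2*d)" by (simp add: power_mult_distrib power_mult)
  finally have "2 * (2 * real (k*k) + 1)^d \<le> 2 * 3^d * real k ^ (2*d)" by simp
  also have "\<dots> < 2^k" using k2 by (simp add: field_simps)
  finally show ?thesis using k1 k3 by (intro exI[of _ k]) auto
qed

lemma shatters_iff: "shatters F Y \<longleftrightarrow> Pow Y \<subseteq> (\<lambda>B. Y \<inter> B) ` F"
  unfolding shatters_def by blast

lemma pajor:
  assumes finW: "finite W"
  shows "H \<subseteq> Pow W \<Longrightarrow> card H \<le> card {Y. Y \<subseteq> W \<and> shatters H Y}"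
proof (induction "card H" arbitrary: H rule: less_induct)
  case less
  have finH: "finite H" using less.prems finW by (meson finite_Pow_iff finite_subset)
  have finSh: "\<And>H'. finite {Y. Y \<subseteq> W \<and> shatters H' Y}"
    by (rule finite_subset[of _ "Pow W"]) (use finW in auto)
  show ?case
  proof (cases "card H \<le> 1")
    case True
    show ?thesis
    proof (cases "H = {}")
      case True then show ?thesis by simp
    next
      case False
      have "{} \<in> {Y. Y \<subseteq> W \<and> shatters H Y}" using False by (auto simp: shatters_def)
      then have "card {Y. Y \<subseteq> W \<and> shatters H Y} > 0" using finSh[of H]
        by (auto simp: card_gt_0_iff)
      then show ?thesis using True by linarith
    qed
  next
    case False
    then obtain h1 h2 where h: "h1 \<in> H" "h2 \<in> H" "h1 \<noteq> h2"
      using card_le_Suc0_iff_eq[OF finH] by auto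
    have "h1 \<subseteq> W" "h2 \<subseteq> W" using h less.prems by auto
    then obtain x where x: "x \<in> W" "(x \<in> h1) \<noteq> (x \<in> h2)" using h(3) by blast
    define H0 where "H0 = {h\<in>H. x \<notin> h}"
    define H1 where "H1 = {h\<in>H. x \<in> h}"
    have H0ne: "H0 \<noteq> {}" and H1ne: "H1 \<noteq> {}" using x h unfolding H0_def H1_def by auto
    have HU: "H = H0 \<union> H1" "H0 \<inter> H1 = {}" unfolding H0_def H1_def by auto
    have fH0: "finite H0" "finite H1" using finH unfolding H0_def H1_def by auto
    have cH: "card H = card H0 + card H1"
      using HU fH0 card_Un_disjoint[of H0 H1] by simp
    have "H0 \<subset> H" using H1ne unfolding H0_def H1_def by auto
    then have c0: "card H0 < card H" by (rule psubset_card_mono[OF finH])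
    have "H1 \<subset> H" using H0ne unfolding H0_def H1_def by auto
    then have c1: "card H1 < card H" by (rule psubset_card_mono[OF finH])
    define Sh where "Sh = {Y. Y \<subseteq> W \<and> shatters H Y}"
    define Sh0 where "Sh0 = {Y. Y \<subseteq> W \<and> shatters H0 Y}"
    define Sh1 where "Sh1 = {Y. Y \<subseteq> W \<and> shatters H1 Y}"
    have IH0: "card H0 \<le> card Sh0" unfolding Sh0_def
      by (rule less.hyps[OF c0]) (use less.prems H0_def in auto)
    have IH1: "card H1 \<le> card Sh1" unfolding Sh1_def
      by (rule less.hyps[OF c1]) (use less.prems H1_def in auto)
    have sub01: "Sh0 \<union> Sh1 \<subseteq> Sh" unfolding Sh_def Sh0_def Sh1_def shatters_iff HU(1) by blast
    have nx: "x \<notin> Y" if "Y \<in> Sh0 \<union> Sh1" for Y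
    proof
      assume xY: "x \<in> Y"
      show False
      proof (cases "Y \<in> Sh0")
        case True
        then have "{x} \<in> (\<lambda>B. Y \<inter> B) ` H0" using xY unfolding Sh0_def shatters_iff by auto
        then show False unfolding H0_def by auto
      next
        case False
        then have "Y \<in> Sh1" using that by auto
        then have "{} \<in> (\<lambda>B. Y \<inter> B) ` H1" using xY unfolding Sh1_def shatters_iff by auto
        then show False unfolding H1_def using xY by auto
      qed
    qed
    have subI: "insert x ` (Sh0 \<inter> Sh1) \<subseteq> Sh"
    proof
      fix Z assume "Z \<in> insert x ` (Sh0 \<inter> Sh1)"
      then obtain Y where Y: "Y \<in> Sh0" "Y \<in> Sh1" "Z = insert x Y" by auto
      have "Pow (insert x Y) \<subseteq> (\<lambda>B. insert x Y \<inter> B) ` H"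
      proof
        fix U assume U: "U \<in> Pow (insert x Y)"
        show "U \<in> (\<lambda>B. insert x Y \<inter> B) ` H"
        proof (cases "x \<in> U")
          case True
          have "U - {x} \<in> (\<lambda>B. Y \<inter> B) ` H1" using Y(2) U unfolding Sh1_def shatters_iff by auto
          then obtain B where B: "B \<in> H1" "U - {x} = Y \<inter> B" by auto
          have "U = insert x Y \<inter> B" using B True unfolding H1_def by auto
          then show ?thesis using B(1) H1_def by auto
        next
          case False
          have "U - {x} \<in> (\<lambda>B. Y \<inter> B) ` H0" using Y(1) U unfolding Sh0_def shatters_iff by auto
          then obtain B where B: "B \<in> H0" "U - {x} = Y \<inter> B" by auto
          have "U = insert x Y \<inter> B" using B False unfolding H0_def by auto
          then show ?thesis using B(1) H0_def by auto
        qed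
      qed
      then show "Z \<in> Sh" using Y x(1) unfolding Sh_def Sh0_def shatters_iff by auto
    qed
    have fin0: "finite Sh0" "finite Sh1" "finite Sh" unfolding Sh0_def Sh1_def Sh_def using finSh by auto
    have disj: "(Sh0 \<union> Sh1) \<inter> insert x ` (Sh0 \<inter> Sh1) = {}" using nx by auto
    have inj: "inj_on (insert x) (Sh0 \<inter> Sh1)"
    proof (rule inj_onI)
      fix Y1 Y2 assume "Y1 \<in> Sh0 \<inter> Sh1" "Y2 \<in> Sh0 \<inter> Sh1" "insert x Y1 = insert x Y2"
      moreover have "x \<notin> Y1" "x \<notin> Y2" using nx calculation by auto
      ultimately show "Y1 = Y2" by (metis Diff_insert_absorb)
    qed
    have "card H \<le> card Sh0 + card Sh1" using cH IH0 IH1 by linarith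
    also have "\<dots> = card (Sh0 \<union> Sh1) + card (Sh0 \<inter> Sh1)" by (rule card_Un_Int[OF fin0(1) fin0(2)])
    also have "\<dots> = card (Sh0 \<union> Sh1) + card (insert x ` (Sh0 \<inter> Sh1))" using inj by (simp add: card_image)
    also have "\<dots> = card ((Sh0 \<union> Sh1) \<union> insert x ` (Sh0 \<inter> Sh1))"
      using card_Un_disjoint[of "Sh0 \<union> Sh1" "insert x ` (Sh0 \<inter> Sh1)"] disj fin0 by simp
    also have "\<dots> \<le> card Sh" using sub01 subI fin0 by (intro card_mono) (simp_all only: Un_subset_iff)
    finally show ?thesis unfolding Sh_def .
  qed
qed

lemma sum_pow_le: "(\<Sum>i\<le>d. (N::nat) ^ i) \<le> (N + 1) ^ d"
proof (induction d)
  case 0 then show ?case by simp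
next
  case (Suc d)
  have "N ^ d \<le> (N+1)^d" by (simp add: power_mono)
  then have "N ^ Suc d \<le> N * (N+1)^d" by simp
  have "(\<Sum>i\<le>Suc d. N ^ i) = (\<Sum>i\<le>d. N ^ i) + N ^ Suc d" by simp
  also have "\<dots> \<le> (N+1)^d + N * (N+1)^d" using Suc.IH \<open>N ^ Suc d \<le> N * (N+1)^d\<close> by (rule add_mono)
  also have "\<dots> = (N+1) ^ Suc d" by simp
  finally show ?case .
qed

lemma small_subsets: assumes "finite W"
  shows "card {Y. Y \<subseteq> W \<and> card Y \<le> d} \<le> (card W + 1) ^ d"
proof -
  have eq: "{Y. Y \<subseteq> W \<and> card Y \<le> d} = (\<Union>i\<in>{..d}. {Y. Y \<subseteq> W \<and> card Y = i})" by auto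
  have "card {Y. Y \<subseteq> W \<and> card Y \<le> d} \<le> (\<Sum>i\<le>d. card {Y. Y \<subseteq> W \<and> card Y = i})"
    unfolding eq by (rule card_UN_le) simp
  also have "\<dots> = (\<Sum>i\<le>d. card W choose i)" using n_subsets[OF assms] by simp
  also have "\<dots> \<le> (\<Sum>i\<le>d. card W ^ i)"
  proof (rule sum_mono)
    fix i show "card W choose i \<le> card W ^ i"
      by (cases "i \<le> card W") (auto simp: binomial_le_pow binomial_eq_0)
  qed
  also have "\<dots> \<le> (card W + 1) ^ d" by (rule sum_pow_le)
  finally show ?thesis .
qed

lemma trace_bound:
  assumes "finite W" "\<forall>Y. Y \<subseteq> W \<longrightarrow> shatters F Y \<longrightarrow> card Y \<le> d"
  shows "card ((\<lambda>S. W \<inter> S) ` F) \<le> (card W + 1) ^ d"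
proof -
  let ?H = "(\<lambda>S. W \<inter> S) ` F"
  have sh: "shatters ?H Y = shatters F Y" if "Y \<subseteq> W" for Y
  proof -
    have "\<And>S. Y \<inter> (W \<inter> S) = Y \<inter> S" using that by blast
    then have "(\<lambda>B. Y \<inter> B) ` ?H = (\<lambda>B. Y \<inter> B) ` F" by (simp add: image_image)
    then show ?thesis unfolding shatters_def by simp
  qed
  have "card ?H \<le> card {Y. Y \<subseteq> W \<and> shatters ?H Y}" by (rule pajor[OF assms(1)]) auto
  also have "\<dots> \<le> card {Y. Y \<subseteq> W \<and> card Y \<le> d}"
  proof (rule card_mono)
    show "finite {Y. Y \<subseteq> W \<and> card Y \<le> d}" by (rule finite_subset[of _ "Pow W"]) (use assms(1) in auto)
    show "{Y. Y \<subseteq> W \<and> shatters ?H Y} \<subseteq> {Y. Y \<subseteq> W \<and> card Y \<le> d}" using assms(2) sh by blast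
  qed
  also have "\<dots> \<le> (card W + 1) ^ d" by (rule small_subsets[OF assms(1)])
  finally show ?thesis .
qed



lemma G_bound:
  fixes y z :: "nat \<times> nat \<Rightarrow> 'a" and R :: "'a set" and k :: nat
  shows "card {s \<in> Pow ({..<k} \<times> {..<k}). (\<forall>i\<in>{..<k} \<times> {..<k}. (if i \<in> s then z i else y i) \<notin> R) \<and>
            (\<forall>j<k. \<exists>l<k. (if (j,l) \<in> s then y (j,l) else z (j,l)) \<in> R)} \<le> 2 ^ (k*k - k)"
    (is "card ?G \<le> _")
proof (cases "?G = {}")
  case True then show ?thesis by (simp only: card.empty zero_le)
next
  case False
  define I where "I = {..<k} \<times> {..<k}"
  have finI: "finite I" unfolding I_def by (intro finite_cartesian_product finite_lessThan)
  have cI: "card I = k*k" unfolding I_def card_cartesian_product card_lessThan ..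
  have "\<exists>s0. s0 \<in> ?G" by (subst ex_in_conv) (rule False)
  then obtain s0 where s0: "s0 \<in> ?G" by (rule exE)
  define Mix where "Mix = {i\<in>I. (y i \<in> R) \<noteq> (z i \<in> R)}"
  define D where "D = {i\<in>Mix. y i \<in> R}"
  have MI: "Mix \<subseteq> I" and finM: "finite Mix" using finI unfolding Mix_def by auto
  have "\<forall>j. \<exists>l. j < k \<longrightarrow> l < k \<and> (j,l) \<in> Mix"
  proof (intro allI)
    fix j show "\<exists>l. j < k \<longrightarrow> l < k \<and> (j,l) \<in> Mix"
    proof (cases "j < k")
      case True
      then obtain l where l: "l < k" "(if (j,l) \<in> s0 then y (j,l) else z (j,l)) \<in> R" using s0 by auto
      have "(j,l) \<in> I" using True l unfolding I_def by auto
      then have "(if (j,l) \<in> s0 then z (j,l) else y (j,l)) \<notin> R" using s0 unfolding I_def by auto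
      then have "(j,l) \<in> Mix" using l \<open>(j,l) \<in> I\<close> unfolding Mix_def by (auto split: if_splits)
      then show ?thesis using l by auto
    qed auto
  qed
  then obtain f where f: "\<And>j. j < k \<Longrightarrow> f j < k \<and> (j, f j) \<in> Mix" by metis
  have "card {..<k} \<le> card Mix"
    by (rule card_inj_on_le[of "\<lambda>j. (j, f j)"]) (use f finM in \<open>auto simp: inj_on_def\<close>)
  then have kM: "k \<le> card Mix" by simp
  have sub: "?G \<subseteq> (\<lambda>t. t \<union> D) ` Pow (I - Mix)"
  proof
    fix s assume s: "s \<in> ?G"
    have sI: "s \<subseteq> I" using s unfolding I_def by auto
    have "s \<inter> Mix = D"
    proof -
      have "i \<in> s \<longleftrightarrow> y i \<in> R" if "i \<in> Mix" for i
      proof -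
        have "i \<in> I" using that MI by auto
        then have "(if i \<in> s then z i else y i) \<notin> R" using s unfolding I_def by blast
        then show ?thesis using that unfolding Mix_def by (auto split: if_splits)
      qed
      then show ?thesis unfolding D_def by auto
    qed
    then have "s = (s - Mix) \<union> D" by auto
    moreover have "s - Mix \<in> Pow (I - Mix)" using sI by auto
    ultimately show "s \<in> (\<lambda>t. t \<union> D) ` Pow (I - Mix)" by blast
  qed
  have inj: "inj_on (\<lambda>t. t \<union> D) (Pow (I - Mix))"
    unfolding inj_on_def D_def by blast
  have "card ?G \<le> card ((\<lambda>t. t \<union> D) ` Pow (I - Mix))"
    by (rule card_mono) (use sub finI in auto)
  also have "\<dots> = card (Pow (I - Mix))" by (rule card_image[OF inj])
  also have "\<dots> = 2 ^ card (I - Mix)" using finI by (simp add: card_Pow)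
  also have "card (I - Mix) = k*k - card Mix" using card_Diff_subset[OF finM MI] cI by simp
  also have "(2::nat) ^ (k*k - card Mix) \<le> 2 ^ (k*k - k)" using kM by (intro power_increasing) auto
  finally show ?thesis .
qed

lemma stepA:
  fixes U S :: "'a set" and \<alpha> :: real and k :: nat
  assumes finX: "finite U" and SX: "S \<subseteq> U" and dens: "\<alpha> * card U \<le> card S" and a0: "0 \<le> \<alpha>"
  shows "real (card (PiE ({..<k} \<times> {..<k}) (\<lambda>_. U))) - real k * (1-\<alpha>)^k * real (card (PiE ({..<k} \<times> {..<k}) (\<lambda>_. U)))
     \<le> real (card {z \<in> PiE ({..<k} \<times> {..<k}) (\<lambda>_. U). \<forall>j<k. \<exists>l<k. z (j,l) \<in> S})"
proof -
  define I where "I = {..<k} \<times> {..<k}"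
  define M where "M = PiE I (\<lambda>_. U)"
  define n where "n = card U"
  define Good where "Good = {z \<in> M. \<forall>j<k. \<exists>l<k. z (j,l) \<in> S}"
  define B where "B j = {z \<in> M. \<forall>l<k. z (j,l) \<notin> S}" for j
  have finI: "finite I" unfolding I_def by (intro finite_cartesian_product finite_lessThan)
  have cI: "card I = k*k" unfolding I_def card_cartesian_product card_lessThan ..
  have finM: "finite M" unfolding M_def using finI finX by (simp add: finite_PiE)
  have cM: "card M = n ^ (k*k)" unfolding M_def n_def using finI cI by (simp add: card_PiE)
  have GM: "Good \<subseteq> M" unfolding Good_def by auto
  have MG: "M - Good \<subseteq> (\<Union>j\<in>{..<k}. B j)" unfolding Good_def B_def by auto
  have "finite (\<Union>j\<in>{..<k}. B j)" by (rule finite_subset[OF _ finM]) (auto simp: B_def)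
  then have "card (M - Good) \<le> card (\<Union>j\<in>{..<k}. B j)" using MG by (rule card_mono)
  also have "\<dots> \<le> (\<Sum>j<k. card (B j))" by (rule card_UN_le) simp
  finally have c1': "card (M - Good) \<le> (\<Sum>j<k. card (B j))" .
  have c1: "real (card (M - Good)) \<le> (\<Sum>j<k. real (card (B j)))"
    unfolding of_nat_sum[symmetric] using c1' by (rule of_nat_mono)
  have Bj: "real (card (B j)) \<le> (1-\<alpha>)^k * real (card M)" if j: "j < k" for j
  proof -
    define C where "C i = (if fst i = j then U - S else U)" for i :: "nat \<times> nat"
    have memI: "\<And>a b. (a,b) \<in> I \<longleftrightarrow> a < k \<and> b < k" unfolding I_def by simp
    have "z \<in> B j \<longleftrightarrow> z \<in> PiE I C" for z
    proof
      assume z: "z \<in> B j"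
      then have zM: "z \<in> M" and zS: "\<forall>l<k. z (j,l) \<notin> S" unfolding B_def by blast+
      show "z \<in> PiE I C"
      proof (rule PiE_I)
        fix i assume iI: "i \<in> I"
        obtain a b where i: "i = (a,b)" by fastforce
        have "z i \<in> U" using zM iI unfolding M_def by blast
        moreover have "fst i = j \<Longrightarrow> z i \<notin> S" using zS iI memI i by auto
        ultimately show "z i \<in> C i" unfolding C_def by auto
      next
        fix i assume "i \<notin> I"
        then show "z i = undefined" using zM unfolding M_def PiE_def extensional_def by blast
      qed
    next
      assume z: "z \<in> PiE I C"
      have CU: "C i \<subseteq> U" for i unfolding C_def by auto
      have "z \<in> M" unfolding M_def using z CU by (auto simp: PiE_iff)
      moreover have "\<forall>l<k. z (j,l) \<notin> S"
      proof (intro allI impI)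
        fix l assume "l < k"
        then have "(j,l) \<in> I" using memI j by auto
        then have "z (j,l) \<in> C (j,l)" using z by (auto simp: PiE_iff)
        then show "z (j,l) \<notin> S" unfolding C_def by auto
      qed
      ultimately show "z \<in> B j" unfolding B_def by blast
    qed
    then have "B j = PiE I C" by blast
    then have "B j = PiE I (\<lambda>i. if fst i = j then U - S else U)" unfolding C_def by simp
    then have "real (card (B j)) = (\<Prod>i\<in>I. real (card (if fst i = j then U - S else U)))"
      using finI by (simp add: card_PiE)
    also have "\<dots> \<le> (\<Prod>i\<in>I. real n * (if fst i = j then 1 - \<alpha> else 1))"
    proof (rule prod_mono)
      fix i assume "i \<in> I"
      have "card S \<le> n" unfolding n_def using SX finX by (simp add: card_mono)
      then have "real (card (U - S)) = real n - real (card S)"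
        using card_Diff_subset[OF finite_subset[OF SX finX] SX] unfolding n_def by (simp add: of_nat_diff)
      also have "\<dots> \<le> real n * (1 - \<alpha>)" using dens unfolding n_def by (simp add: algebra_simps)
      finally show "0 \<le> real (card (if fst i = j then U - S else U)) \<and>
          real (card (if fst i = j then U - S else U)) \<le> real n * (if fst i = j then 1 - \<alpha> else 1)"
        unfolding n_def by auto
    qed
    also have "\<dots> = real n ^ (k*k) * (\<Prod>i\<in>I. (if fst i = j then 1 - \<alpha> else 1))"
      by (simp add: prod.distrib cI)
    also have "(\<Prod>i\<in>I. (if fst i = j then 1 - \<alpha> else 1)) = (\<Prod>a<k. \<Prod>b<k. (if a = j then 1 - \<alpha> else (1::real)))"
    proof -
      have "(\<Prod>i\<in>I. (if fst i = j then 1 - \<alpha> else 1)) = (\<Prod>(a,b)\<in>{..<k}\<times>{..<k}. (if a = j then 1 - \<alpha> else (1::real)))"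
        unfolding I_def by (rule prod.cong) auto
      also have "\<dots> = (\<Prod>a<k. \<Prod>b<k. (if a = j then 1 - \<alpha> else (1::real)))"
        by (rule prod.cartesian_product[symmetric])
      finally show ?thesis .
    qed
    also have "\<dots> = (\<Prod>a<k. (if a = j then (1 - \<alpha>)^k else (1::real)))"
      by (rule prod.cong) auto
    also have "\<dots> = (1-\<alpha>)^k" using j by (simp add: prod.delta)
    finally show ?thesis using cM by (simp add: mult.commute)
  qed
  have "card M = card Good + card (M - Good)" using GM finM
    by (metis card_Diff_subset card_mono finite_subset le_add_diff_inverse)
  then have "real (card M) = real (card Good) + real (card (M - Good))" by simp
  moreover have "(\<Sum>j<k. real (card (B j))) \<le> (\<Sum>j<k. (1-\<alpha>)^k * real (card M))"
    by (rule sum_mono) (use Bj in auto)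
  ultimately have "real (card M) \<le> real (card Good) + real k * (1-\<alpha>)^k * real (card M)"
    using c1 by simp
  then show ?thesis unfolding M_def I_def Good_def by simp
qed

lemma double_count:
  assumes "finite A" "finite B"
  shows "(\<Sum>a\<in>A. card {b\<in>B. P a b}) = (\<Sum>b\<in>B. card {a\<in>A. P a b})"
proof -
  have e1: "card {b\<in>B. P a b} = (\<Sum>b\<in>B. if P a b then 1 else 0)" for a
    using sum.inter_filter[OF assms(2), of "\<lambda>_. (1::nat)" "P a"] by simp
  have e2: "card {a\<in>A. P a b} = (\<Sum>a\<in>A. if P a b then 1 else 0)" for b
    using sum.inter_filter[OF assms(1), of "\<lambda>_. (1::nat)" "\<lambda>a. P a b"] by simp
  show ?thesis unfolding e1 e2 by (rule sum.swap)
qed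

lemma eps_net:
  fixes U :: "'a set" and F :: "'a set set" and \<alpha> :: real and k d :: nat
  assumes finU: "finite U" and Une: "U \<noteq> {}"
    and FU: "\<forall>S\<in>F. S \<subseteq> U \<and> \<alpha> * card U \<le> card S"
    and a0: "0 < \<alpha>"
    and vc: "\<forall>Y. Y \<subseteq> U \<longrightarrow> shatters F Y \<longrightarrow> card Y \<le> d"
    and k0: "0 < k" and k1: "real k * (1-\<alpha>)^k \<le> 1/2" and k2: "2 * (2 * real (k*k) + 1)^d < 2^k"
  shows "\<exists>T \<subseteq> U. card T \<le> k*k \<and> (\<forall>S\<in>F. S \<inter> T \<noteq> {})"
proof -
  define I where "I = {..<k} \<times> {..<k}"
  define m where "m = k*k"
  define M where "M = PiE I (\<lambda>_. U)"
  define n where "n = card U"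
  define Q where "Q y z \<longleftrightarrow> (\<exists>S\<in>F. (\<forall>i\<in>I. y i \<notin> S) \<and> (\<forall>j<k. \<exists>l<k. z (j,l) \<in> S))"
    for y z :: "nat \<times> nat \<Rightarrow> 'a"
  define E0 where "E0 = {y\<in>M. \<exists>S\<in>F. \<forall>i\<in>I. y i \<notin> S}"
  define E1 where "E1 = Sigma M (\<lambda>y. {z\<in>M. Q y z})"
  define sw where "sw s = (\<lambda>(y::nat \<times> nat \<Rightarrow> 'a, z::nat \<times> nat \<Rightarrow> 'a).
        ((\<lambda>i. if i \<in> s then z i else y i), (\<lambda>i. if i \<in> s then y i else z i)))" for s
  have finI: "finite I" unfolding I_def by (intro finite_cartesian_product finite_lessThan)
  have cI: "card I = m" unfolding I_def m_def card_cartesian_product card_lessThan ..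
  have finM: "finite M" unfolding M_def using finI finU by (simp add: finite_PiE)
  have cM: "card M = n ^ m" unfolding M_def n_def using finI cI by (simp add: card_PiE)
  have npos: "n > 0" unfolding n_def using finU Une by (simp add: card_gt_0_iff)
  have cMpos: "real (card M) > 0" using cM npos by simp
  have km: "k \<le> m" unfolding m_def using k0 by simp
  have E0M: "E0 \<subseteq> M" unfolding E0_def by blast
  have fibre: "real (card M) / 2 \<le> real (card {z\<in>M. Q y z})" if y: "y \<in> E0" for y
  proof -
    obtain S where S: "S \<in> F" "\<forall>i\<in>I. y i \<notin> S" using y unfolding E0_def by blast
    have "real (card M) - real k * (1-\<alpha>)^k * real (card M) \<le> real (card {z \<in> M. \<forall>j<k. \<exists>l<k. z (j,l) \<in> S})"
      unfolding M_def I_def by (rule stepA[OF finU]) (use FU S a0 in auto)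
    also have "card {z \<in> M. \<forall>j<k. \<exists>l<k. z (j,l) \<in> S} \<le> card {z\<in>M. Q y z}"
      by (rule card_mono) (use finM S in \<open>auto simp: Q_def\<close>)
    finally have "real (card M) - real k * (1-\<alpha>)^k * real (card M) \<le> real (card {z\<in>M. Q y z})" by simp
    moreover have "real k * (1-\<alpha>)^k * real (card M) \<le> 1/2 * real (card M)"
      using k1 by (intro mult_right_mono) auto
    ultimately show ?thesis by simp
  qed
  have A: "real (card E0) * real (card M) / 2 \<le> real (card E1)"
  proof -
    have "real (card E1) = (\<Sum>y\<in>M. real (card {z\<in>M. Q y z}))"
      unfolding E1_def using finM by (simp add: card_SigmaI)
    also have "\<dots> \<ge> (\<Sum>y\<in>E0. real (card {z\<in>M. Q y z}))"
      by (rule sum_mono2[OF finM E0M]) auto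
    also have "(\<Sum>y\<in>E0. real (card {z\<in>M. Q y z})) \<ge> (\<Sum>y\<in>E0. real (card M) / 2)"
      by (rule sum_mono) (rule fibre)
    finally show ?thesis by simp
  qed
  have swsw: "sw s (sw s w) = w" for s w by (cases w) (auto simp: sw_def fun_eq_iff)
  have swM: "sw s w \<in> M \<times> M" if "s \<subseteq> I" "w \<in> M \<times> M" for s w
  proof -
    obtain y z where w: "w = (y,z)" by fastforce
    have "y \<in> M" "z \<in> M" using that w by auto
    then show ?thesis using that(1) unfolding w sw_def M_def by (auto simp: PiE_iff extensional_def)
  qed
  have E1O: "E1 \<subseteq> M \<times> M" unfolding E1_def by auto
  have inv: "card {w \<in> M \<times> M. sw s w \<in> E1} = card E1" if s: "s \<subseteq> I" for s
  proof -
    have ij: "inj_on (sw s) {w \<in> M \<times> M. sw s w \<in> E1}"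
      by (rule inj_on_inverseI[where g = "sw s"]) (rule swsw)
    have im: "sw s ` {w \<in> M \<times> M. sw s w \<in> E1} = E1"
    proof
      show "sw s ` {w \<in> M \<times> M. sw s w \<in> E1} \<subseteq> E1" by auto
      show "E1 \<subseteq> sw s ` {w \<in> M \<times> M. sw s w \<in> E1}"
      proof
        fix e assume e: "e \<in> E1"
        have "sw s e \<in> M \<times> M" using swM[OF s] e E1O by auto
        moreover have "sw s (sw s e) \<in> E1" using e swsw by simp
        ultimately have "sw s e \<in> {w \<in> M \<times> M. sw s w \<in> E1}" by blast
        then have "sw s (sw s e) \<in> sw s ` {w \<in> M \<times> M. sw s w \<in> E1}" by (rule imageI)
        then show "e \<in> sw s ` {w \<in> M \<times> M. sw s w \<in> E1}" unfolding swsw .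
      qed
    qed
    show ?thesis using card_image[OF ij] unfolding im by (rule sym)
  qed
  have perw: "card {s \<in> Pow I. sw s w \<in> E1} \<le> (2*m+1)^d * 2^(m-k)" if w: "w \<in> M \<times> M" for w
  proof -
    obtain y z where wyz: "w = (y,z)" by fastforce
    have yM: "y \<in> M" and zM: "z \<in> M" using w wyz by auto
    define W where "W = y ` I \<union> z ` I"
    define H where "H = (\<lambda>S. W \<inter> S) ` F"
    define G where "G R = {s \<in> Pow ({..<k} \<times> {..<k}). (\<forall>i\<in>{..<k} \<times> {..<k}. (if i \<in> s then z i else y i) \<notin> R) \<and>
            (\<forall>j<k. \<exists>l<k. (if (j,l) \<in> s then y (j,l) else z (j,l)) \<in> R)}" for R
    have WU: "W \<subseteq> U" unfolding W_def using yM zM unfolding M_def by (auto simp: PiE_iff)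
    have finW: "finite W" unfolding W_def using finI by simp
    have cW: "card W \<le> 2*m"
    proof -
      have "card W \<le> card (y ` I) + card (z ` I)" unfolding W_def by (rule card_Un_le)
      also have "\<dots> \<le> card I + card I" by (intro add_mono card_image_le finI)
      finally show ?thesis using cI by simp
    qed
    have sub: "{s \<in> Pow I. sw s w \<in> E1} \<subseteq> (\<Union>R\<in>H. G R)"
    proof
      fix s assume s: "s \<in> {s \<in> Pow I. sw s w \<in> E1}"
      define y' where "y' = (\<lambda>i. if i \<in> s then z i else y i)"
      define z' where "z' = (\<lambda>i. if i \<in> s then y i else z i)"
      have "sw s w = (y', z')" unfolding wyz sw_def y'_def z'_def by simp
      then have "Q y' z'" using s unfolding E1_def by auto
      then obtain S where S: "S \<in> F" "\<forall>i\<in>I. y' i \<notin> S" "\<forall>j<k. \<exists>l<k. z' (j,l) \<in> S"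
        unfolding Q_def by blast
      have inW: "z' i \<in> W" if "i \<in> I" for i using that unfolding z'_def W_def by auto
      have "s \<in> G (W \<inter> S)"
      proof -
        have "s \<in> Pow ({..<k} \<times> {..<k})" using s unfolding I_def by blast
        moreover have "\<forall>i\<in>{..<k} \<times> {..<k}. (if i \<in> s then z i else y i) \<notin> W \<inter> S"
          using S(2) unfolding I_def y'_def by blast
        moreover have "\<forall>j<k. \<exists>l<k. (if (j,l) \<in> s then y (j,l) else z (j,l)) \<in> W \<inter> S"
        proof (intro allI impI)
          fix j assume j: "j < k"
          then obtain l where l: "l < k" "z' (j,l) \<in> S" using S(3) by blast
          have "(j,l) \<in> I" unfolding I_def using j l by simp
          then have "z' (j,l) \<in> W" by (rule inW)
          then show "\<exists>l<k. (if (j,l) \<in> s then y (j,l) else z (j,l)) \<in> W \<inter> S"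
            using l unfolding z'_def by blast
        qed
        ultimately show ?thesis unfolding G_def by blast
      qed
      moreover have "W \<inter> S \<in> H" unfolding H_def using S(1) by blast
      ultimately show "s \<in> (\<Union>R\<in>H. G R)" by blast
    qed
    have finH: "finite H" unfolding H_def
      by (rule finite_subset[of _ "Pow W"]) (use finW in auto)
    have "card {s \<in> Pow I. sw s w \<in> E1} \<le> card (\<Union>R\<in>H. G R)"
    proof (rule card_mono[OF _ sub])
      show "finite (\<Union>R\<in>H. G R)" using finH unfolding G_def by (intro finite_UN_I) auto
    qed
    also have "\<dots> \<le> (\<Sum>R\<in>H. card (G R))" by (rule card_UN_le[OF finH])
    also have "\<dots> \<le> (\<Sum>R\<in>H. 2^(m-k))"
      by (rule sum_mono) (unfold G_def m_def, rule G_bound)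
    also have "\<dots> = card H * 2^(m-k)" by simp
    also have "card H \<le> (card W + 1)^d" unfolding H_def
      by (rule trace_bound[OF finW]) (use vc WU in auto)
    also have "(card W + 1)^d \<le> (2*m+1)^d" using cW by (intro power_mono) auto
    finally show ?thesis by simp
  qed
  have B: "real (card E1) * 2^m \<le> real (card M)^2 * (2*m+1)^d * 2^(m-k)"
  proof -
    have "(\<Sum>s\<in>Pow I. card {w \<in> M \<times> M. sw s w \<in> E1}) = (\<Sum>s\<in>Pow I. card E1)"
      by (rule sum.cong) (auto simp: inv)
    also have "\<dots> = card E1 * 2^m" using finI cI by (simp add: card_Pow)
    finally have "card E1 * 2^m = (\<Sum>s\<in>Pow I. card {w \<in> M \<times> M. sw s w \<in> E1})" by simp
    also have "\<dots> = (\<Sum>w\<in>M \<times> M. card {s \<in> Pow I. sw s w \<in> E1})"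
      by (rule double_count) (use finI finM in auto)
    also have "\<dots> \<le> (\<Sum>w\<in>M \<times> M. (2*m+1)^d * 2^(m-k))" by (rule sum_mono) (rule perw)
    also have "\<dots> = card M ^ 2 * (2*m+1)^d * 2^(m-k)"
      using finM by (simp add: card_cartesian_product power2_eq_square)
    finally have "card E1 * 2^m \<le> card M ^ 2 * (2*m+1)^d * 2^(m-k)" .
    then have "real (card E1 * 2^m) \<le> real (card M ^ 2 * (2*m+1)^d * 2^(m-k))" by (rule of_nat_mono)
    then show ?thesis by simp
  qed
  have pw: "(2::real)^m = 2^(m-k) * 2^k" using km by (simp add: power_add[symmetric])
  have "real (card E0) * real (card M) / 2 * 2^m \<le> real (card M)^2 * (2*m+1)^d * 2^(m-k)"
    using A B by (meson mult_right_mono order_trans zero_le_power zero_le_numeral)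
  then have "real (card E0) * real (card M) * 2^k \<le> 2 * real (card M)^2 * (2*m+1)^d"
    unfolding pw by (simp add: field_simps)
  then have "real (card E0) * 2^k \<le> 2 * real (card M) * (2*m+1)^d"
    using cMpos by (simp add: power2_eq_square field_simps)
  moreover have "2 * real (card M) * (2*m+1)^d < real (card M) * 2^k"
  proof -
    have k2': "2 * (2 * real m + 1)^d < 2^k" using k2 unfolding m_def by simp
    show ?thesis using mult_strict_left_mono[OF k2' cMpos] by (simp add: mult_ac add.commute)
  qed
  ultimately have "real (card E0) < real (card M)"
    by (smt (verit) mult.commute mult_right_less_imp_less zero_le_power)
  then have "card E0 < card M" by simp
  have finE0: "finite E0" using E0M finM by (rule finite_subset)
  have "\<not> M \<subseteq> E0"
  proof
    assume "M \<subseteq> E0"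
    then have "card M \<le> card E0" by (rule card_mono[OF finE0])
    then show False using \<open>card E0 < card M\<close> by simp
  qed
  then obtain y where y: "y \<in> M" "y \<notin> E0" by blast
  show ?thesis
  proof (intro exI conjI)
    show "y ` I \<subseteq> U" using y(1) unfolding M_def by (auto simp: PiE_iff)
    show "card (y ` I) \<le> k*k" using card_image_le[OF finI, of y] cI m_def by simp
    show "\<forall>S\<in>F. S \<inter> y ` I \<noteq> {}" using y unfolding E0_def by blast
  qed
qed

theorem proposition6p1:
  fixes cs :: "int list" and \<G> :: "'a monoid set"
  assumes "length cs \<ge> 3"
    and "\<forall>c\<in>set cs. c \<noteq> 0"
    and "\<forall>G\<in>\<G>. comm_group G \<and> finite (carrier G)"
    and "delta_VC \<G> cs = 0"
  shows "\<forall>\<alpha>>0. \<exists>K::nat. \<forall>G\<in>\<G>. \<forall>A. A \<subseteq> carrier G \<and> solution_free G cs A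
            \<and> real (card A) \<ge> \<alpha> * real (card (carrier G)) \<longrightarrow>
            (\<exists>T. T \<subseteq> carrier G \<and> card T \<le> K \<and> A <#>\<^bsub>G\<^esub> T = carrier G)"
proof (intro allI impI)
  fix \<alpha> :: real assume a: "\<alpha> > 0"
  define a' where "a' = min \<alpha> (1/2)"
  have a'0: "0 < a'" "a' < 1" "a' \<le> \<alpha>" unfolding a'_def using a by auto
  define Sset where "Sset = {\<alpha>. \<alpha> \<ge> 0 \<and> (\<exists>C::nat. \<forall>G\<in>\<G>. \<forall>A. A \<subseteq> carrier G \<and> solution_free G cs A
        \<and> real (card A) \<ge> \<alpha> * real (card (carrier G)) \<longrightarrow> vc_cayley G A \<le> C)}"
  have dI: "Inf Sset = 0" using assms(4) unfolding delta_VC_def Sset_def .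
  have ne: "(2::real) \<in> Sset"
  proof -
    have "\<not> (A \<subseteq> carrier G \<and> real (card A) \<ge> 2 * real (card (carrier G)))" if G: "G \<in> \<G>" for G and A :: "'a set"
    proof
      assume h: "A \<subseteq> carrier G \<and> real (card A) \<ge> 2 * real (card (carrier G))"
      have cg: "comm_group G" "finite (carrier G)" using assms(3) G by auto
      then have "\<one>\<^bsub>G\<^esub> \<in> carrier G" by (simp add: comm_group.axioms(2) group.is_monoid monoid.one_closed)
      then have "card (carrier G) > 0" using cg(2) by (auto simp: card_gt_0_iff)
      moreover have "card A \<le> card (carrier G)" using h cg(2) by (simp add: card_mono)
      ultimately show False using h by linarith
    qed
    then show ?thesis unfolding Sset_def by auto
  qed
  then have "Sset \<noteq> {}" by auto
  moreover have "Inf Sset < a'" using dI a'0 by simp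
  ultimately obtain \<beta> where \<beta>: "\<beta> \<in> Sset" "\<beta> < a'" using cInf_lessD by blast
  then obtain C :: nat where C: "\<forall>G\<in>\<G>. \<forall>A. A \<subseteq> carrier G \<and> solution_free G cs A
        \<and> real (card A) \<ge> \<beta> * real (card (carrier G)) \<longrightarrow> vc_cayley G A \<le> C"
    unfolding Sset_def by blast
  obtain k :: nat where k: "k > 0" "real k * (1-a')^k \<le> 1/2" "2 * (2 * real (k*k) + 1)^C < 2^k"
    using exists_k[OF a'0(1) a'0(2)] by blast
  show "\<exists>K::nat. \<forall>G\<in>\<G>. \<forall>A. A \<subseteq> carrier G \<and> solution_free G cs A
            \<and> real (card A) \<ge> \<alpha> * real (card (carrier G)) \<longrightarrow>
            (\<exists>T. T \<subseteq> carrier G \<and> card T \<le> K \<and> A <#>\<^bsub>G\<^esub> T = carrier G)"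
  proof (intro exI[of _ "k*k"] ballI allI impI)
    fix G and A :: "'a set"
    assume G: "G \<in> \<G>" and hA: "A \<subseteq> carrier G \<and> solution_free G cs A \<and> real (card A) \<ge> \<alpha> * real (card (carrier G))"
    have cg: "comm_group G" "finite (carrier G)" using assms(3) G by auto
    interpret G: comm_group G by (rule cg(1))
    have AG: "A \<subseteq> carrier G" using hA by blast
    have n0: "real (card (carrier G)) \<ge> 0" by simp
    have dens: "a' * real (card (carrier G)) \<le> real (card A)"
      using hA mult_right_mono[OF a'0(3) n0] by linarith
    have densb: "\<beta> * real (card (carrier G)) \<le> real (card A)"
      using dens mult_right_mono[of \<beta> a', OF _ n0] \<beta>(2) by linarith
    have vcA: "vc_cayley G A \<le> C" using C G hA densb by blast
    define F where "F = (\<lambda>x. neg_translate G x A) ` carrier G"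
    have Gne: "carrier G \<noteq> {}" using G.one_closed by blast
    have FU: "\<forall>S\<in>F. S \<subseteq> carrier G \<and> a' * card (carrier G) \<le> card S"
    proof
      fix S assume "S \<in> F"
      then obtain x where x: "x \<in> carrier G" "S = neg_translate G x A" unfolding F_def by blast
      have inj: "inj_on (\<lambda>a. x \<otimes>\<^bsub>G\<^esub> inv\<^bsub>G\<^esub> a) A"
      proof (rule inj_onI)
        fix a b assume ab: "a \<in> A" "b \<in> A" "x \<otimes>\<^bsub>G\<^esub> inv\<^bsub>G\<^esub> a = x \<otimes>\<^bsub>G\<^esub> inv\<^bsub>G\<^esub> b"
        have "a \<in> carrier G" "b \<in> carrier G" using ab AG by auto
        then have ia: "inv\<^bsub>G\<^esub> a \<in> carrier G" "inv\<^bsub>G\<^esub> b \<in> carrier G" by (simp_all add: G.inv_closed)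
        have "inv\<^bsub>G\<^esub> a = inv\<^bsub>G\<^esub> b" by (rule G.l_cancel[OF ab(3) ia(1) ia(2) x(1)])
        then have "inv\<^bsub>G\<^esub> (inv\<^bsub>G\<^esub> a) = inv\<^bsub>G\<^esub> (inv\<^bsub>G\<^esub> b)" by simp
        then show "a = b" using G.inv_inv[OF \<open>a \<in> carrier G\<close>] G.inv_inv[OF \<open>b \<in> carrier G\<close>] by simp
      qed
      have "S \<subseteq> carrier G" using x AG unfolding neg_translate_def by auto
      moreover have "card S = card A" using x card_image[OF inj] unfolding neg_translate_def by simp
      ultimately show "S \<subseteq> carrier G \<and> a' * card (carrier G) \<le> card S" using dens by simp
    qed
    have vc: "\<forall>Y. Y \<subseteq> carrier G \<longrightarrow> shatters F Y \<longrightarrow> card Y \<le> C"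
    proof (intro allI impI)
      fix Y assume Y: "Y \<subseteq> carrier G" "shatters F Y"
      have finY: "finite Y" using Y(1) cg(2) by (rule finite_subset)
      let ?X = "card ` {Y. Y \<subseteq> carrier G \<and> finite Y \<and> shatters F Y}"
      have "card Y \<in> ?X" using Y finY by blast
      moreover have "bdd_above ?X"
        by (rule bdd_aboveI[of _ "card (carrier G)"]) (use cg(2) in \<open>auto intro: card_mono\<close>)
      ultimately have "card Y \<le> Sup ?X" by (rule cSup_upper)
      also have "Sup ?X = vc_cayley G A" unfolding vc_cayley_def vc_dim_def F_def ..
      finally show "card Y \<le> C" using vcA by simp
    qed
    obtain T where T: "T \<subseteq> carrier G" "card T \<le> k*k" "\<forall>S\<in>F. S \<inter> T \<noteq> {}"
      using eps_net[OF cg(2) Gne FU a'0(1) vc k(1) k(2) k(3)] by blast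
    have "A <#>\<^bsub>G\<^esub> T = carrier G"
    proof
      show "A <#>\<^bsub>G\<^esub> T \<subseteq> carrier G" using AG T(1) unfolding set_mult_def by auto
      show "carrier G \<subseteq> A <#>\<^bsub>G\<^esub> T"
      proof
        fix x assume x: "x \<in> carrier G"
        then have "neg_translate G x A \<in> F" unfolding F_def by blast
        then obtain t where t: "t \<in> T" "t \<in> neg_translate G x A" using T(3) by blast
        then obtain a where a: "a \<in> A" "t = x \<otimes>\<^bsub>G\<^esub> inv\<^bsub>G\<^esub> a" unfolding neg_translate_def by blast
        have aG: "a \<in> carrier G" using a AG by auto
        have "a \<otimes>\<^bsub>G\<^esub> t = x"
          unfolding a(2) using G.m_lcomm[of a x "inv\<^bsub>G\<^esub> a"] aG x by (simp add: G.r_inv)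
        then show "x \<in> A <#>\<^bsub>G\<^esub> T" using a(1) t(1) unfolding set_mult_def by force
      qed
    qed
    then show "\<exists>T. T \<subseteq> carrier G \<and> card T \<le> k*k \<and> A <#>\<^bsub>G\<^esub> T = carrier G" using T by blast
  qed
qed

end
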